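(* Let $\Gamma$ be a finite connected cubic graph, let $\alpha$ be a vertex of $\Gamma$, let $G$ be a vertex-transitive subgroup of $\mathrm{Aut}(\Gamma)$ and let $N$ be a normal subgroup of $G$ acting semiregularly on $V\Gamma$. Suppose that the vertex stabilizer $G_\alpha$ is a non-identity $2$-group and that the normal quotient $\Gamma/N$ is a cycle of length $r\ge 3$. Let $K$ be the kernel of the action of $G$ on the set of $N$-orbits on $V\Gamma$. Then either (1) $|G_\alpha|=2$ and $K_\alpha=1$, or (2) $r$ is even and $G_\alpha=K_\alpha$ is an elementary abelian $2$-group of order at most $2^{r/2}$.
   Context: For $N\le\mathrm{Aut}(\Gamma)$, the normal quotient $\Gamma/N$ is the graph whose vertices are the $N$-orbits on $V\Gamma$, two distinct orbits being adjacent if some edge of $\Gamma$ joins a vertex of one to a vertex of the other. A cycle is a connected graph in which every vertex has valency $2$. $G_\alpha$ and $K_\alpha$ denote the stabilizers of $\alpha$ in $G$ and $K$. *)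

theory Defs
  imports "HOL-Algebra.Algebra"
begin

definition simple_graph :: "'a set \<Rightarrow> ('a \<Rightarrow> 'a \<Rightarrow> bool) \<Rightarrow> bool" where
  "simple_graph V E \<longleftrightarrow> finite V \<and> (\<forall>u v. E u v \<longrightarrow> u \<in> V \<and> v \<in> V)
     \<and> (\<forall>u v. E u v \<longrightarrow> E v u) \<and> (\<forall>v. \<not> E v v)"

definition neighbours :: "'a set \<Rightarrow> ('a \<Rightarrow> 'a \<Rightarrow> bool) \<Rightarrow> 'a \<Rightarrow> 'a set" where
  "neighbours V E v = {w \<in> V. E v w}"

definition graph_connected :: "'a set \<Rightarrow> ('a \<Rightarrow> 'a \<Rightarrow> bool) \<Rightarrow> bool" where
  "graph_connected V E \<longleftrightarrow> V \<noteq> {} \<and>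
     (\<forall>u\<in>V. \<forall>v\<in>V. (\<lambda>x y. x \<in> V \<and> y \<in> V \<and> E x y)\<^sup>*\<^sup>* u v)"

definition cubic :: "'a set \<Rightarrow> ('a \<Rightarrow> 'a \<Rightarrow> bool) \<Rightarrow> bool" where
  "cubic V E \<longleftrightarrow> (\<forall>v\<in>V. card (neighbours V E v) = 3)"

definition is_cycle :: "'a set \<Rightarrow> ('a \<Rightarrow> 'a \<Rightarrow> bool) \<Rightarrow> bool" where
  "is_cycle V E \<longleftrightarrow> graph_connected V E \<and> (\<forall>v\<in>V. card (neighbours V E v) = 2)"

definition Aut :: "'a set \<Rightarrow> ('a \<Rightarrow> 'a \<Rightarrow> bool) \<Rightarrow> ('a \<Rightarrow> 'a) set" where
  "Aut V E = {g \<in> Bij V. \<forall>u\<in>V. \<forall>v\<in>V. E u v \<longleftrightarrow> E (g u) (g v)}"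

definition vertex_transitive :: "'a set \<Rightarrow> ('a \<Rightarrow> 'a) set \<Rightarrow> bool" where
  "vertex_transitive V G \<longleftrightarrow> (\<forall>u\<in>V. \<forall>v\<in>V. \<exists>g\<in>G. g u = v)"

definition semiregular :: "'a set \<Rightarrow> ('a \<Rightarrow> 'a) set \<Rightarrow> bool" where
  "semiregular V N \<longleftrightarrow> (\<forall>g\<in>N. \<forall>v\<in>V. g v = v \<longrightarrow> g = \<one>\<^bsub>BijGroup V\<^esub>)"

definition stab :: "('a \<Rightarrow> 'a) set \<Rightarrow> 'a \<Rightarrow> ('a \<Rightarrow> 'a) set" where
  "stab G a = {g \<in> G. g a = a}"

definition orbit_of :: "('a \<Rightarrow> 'a) set \<Rightarrow> 'a \<Rightarrow> 'a set" where
  "orbit_of N v = {g v | g. g \<in> N}"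

definition orbits :: "'a set \<Rightarrow> ('a \<Rightarrow> 'a) set \<Rightarrow> 'a set set" where
  "orbits V N = orbit_of N ` V"

definition quot_adj :: "('a \<Rightarrow> 'a \<Rightarrow> bool) \<Rightarrow> 'a set \<Rightarrow> 'a set \<Rightarrow> bool" where
  "quot_adj E B C \<longleftrightarrow> B \<noteq> C \<and> (\<exists>u\<in>B. \<exists>v\<in>C. E u v)"

definition orbit_kernel :: "'a set \<Rightarrow> ('a \<Rightarrow> 'a) set \<Rightarrow> ('a \<Rightarrow> 'a) set \<Rightarrow> ('a \<Rightarrow> 'a) set" where
  "orbit_kernel V G N = {g \<in> G. \<forall>B\<in>orbits V N. g ` B = B}"

definition elementary_abelian_2group :: "('a, 'b) monoid_scheme \<Rightarrow> bool" where
  "elementary_abelian_2group H \<longleftrightarrow> comm_group H \<and> (\<forall>x\<in>carrier H. x \<otimes>\<^bsub>H\<^esub> x = \<one>\<^bsub>H\<^esub>)"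

end

theory Submission
  imports Defs
begin


locale L =
  fixes V :: "'a set" and E :: "'a \<Rightarrow> 'a \<Rightarrow> bool"
    and G N :: "('a \<Rightarrow> 'a) set" and \<alpha> :: 'a
  assumes sg: "simple_graph V E" and conn: "graph_connected V E" and cub: "cubic V E"
    and aV: "\<alpha> \<in> V"
    and subG: "subgroup G (BijGroup V)" and aut: "G \<subseteq> Aut V E" and vt: "vertex_transitive V G"
    and nor: "normal N (BijGroup V \<lparr>carrier := G\<rparr>)" and semi: "semiregular V N"
    and cyc: "is_cycle (orbits V N) (quot_adj E)"
begin

abbreviation "G' \<equiv> BijGroup V \<lparr>carrier := G\<rparr>"

lemma GBij: "g \<in> G \<Longrightarrow> g \<in> Bij V"
  using subG subgroup.subset by (fastforce simp: BijGroup_def)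

lemma gV: "g \<in> G \<Longrightarrow> x \<in> V \<Longrightarrow> g x \<in> V"
  using GBij Bij_imp_funcset by fast

lemma ginj: "g \<in> G \<Longrightarrow> inj_on g V"
  using GBij by (auto simp: Bij_def bij_betw_def)

lemma gimg: "g \<in> G \<Longrightarrow> g ` V = V"
  using GBij by (auto simp: Bij_def bij_betw_def)

lemma gext: "g \<in> G \<Longrightarrow> g \<in> extensional V"
  using GBij by (auto simp: Bij_def)

lemma gE: "g \<in> G \<Longrightarrow> u \<in> V \<Longrightarrow> v \<in> V \<Longrightarrow> E (g u) (g v) \<longleftrightarrow> E u v"
  using aut by (auto simp: Aut_def)

lemma EV: "E u v \<Longrightarrow> u \<in> V \<and> v \<in> V"
  using sg by (auto simp: simple_graph_def)

lemma Esym: "E u v \<Longrightarrow> E v u"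
  using sg by (auto simp: simple_graph_def)

lemma Eirr: "\<not> E v v"
  using sg by (auto simp: simple_graph_def)

lemma finV: "finite V"
  using sg by (auto simp: simple_graph_def)

lemma grpG': "group G'"
  using nor normal.axioms(2) by blast

lemma subN: "subgroup N G'"
  using nor normal_imp_subgroup by blast

lemma NG: "N \<subseteq> G"
  using subN subgroup.subset by fastforce

lemma multG': "a \<in> G \<Longrightarrow> b \<in> G \<Longrightarrow> x \<in> V \<Longrightarrow> (a \<otimes>\<^bsub>G'\<^esub> b) x = a (b x)"
  using GBij by (simp add: BijGroup_def compose_def)

lemma oneG': "\<one>\<^bsub>G'\<^esub> = (\<lambda>x\<in>V. x)"
  by (simp add: BijGroup_def)

lemma one_N: "(\<lambda>x\<in>V. x) \<in> N"
  using subN subgroup.one_closed oneG' by fastforce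

lemma Nmult: "n \<in> N \<Longrightarrow> m \<in> N \<Longrightarrow> \<exists>p\<in>N. \<forall>x\<in>V. p x = n (m x)"
proof -
  assume a: "n \<in> N" "m \<in> N"
  have "n \<otimes>\<^bsub>G'\<^esub> m \<in> N" using subgroup.m_closed[OF subN a] .
  moreover have "\<forall>x\<in>V. (n \<otimes>\<^bsub>G'\<^esub> m) x = n (m x)" using multG' a NG by blast
  ultimately show ?thesis by blast
qed

lemma Ninv: "n \<in> N \<Longrightarrow> \<exists>n'\<in>N. \<forall>x\<in>V. n' (n x) = x \<and> n (n' x) = x"
proof -
  assume n: "n \<in> N"
  have nG: "n \<in> carrier G'" using n NG by auto
  let ?i = "inv\<^bsub>G'\<^esub> n"
  have iN: "?i \<in> N" using subN n subgroup.m_inv_closed by fastforce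
  have iG: "?i \<in> G" using iN NG by blast
  have "?i \<otimes>\<^bsub>G'\<^esub> n = \<one>\<^bsub>G'\<^esub>" "n \<otimes>\<^bsub>G'\<^esub> ?i = \<one>\<^bsub>G'\<^esub>"
    using group.l_inv[OF grpG' nG] group.r_inv[OF grpG' nG] by auto
  then have "\<forall>x\<in>V. ?i (n x) = x \<and> n (?i x) = x"
    using multG'[OF iG NG[THEN subsetD, OF n]] multG'[OF NG[THEN subsetD, OF n] iG] oneG'
    by (metis restrict_apply')
  then show ?thesis using iN by blast
qed

lemma Ginv: "g \<in> G \<Longrightarrow> \<exists>g'\<in>G. \<forall>x\<in>V. g' (g x) = x \<and> g (g' x) = x"
proof -
  assume n: "g \<in> G"
  have nG: "g \<in> carrier G'" using n by simp
  let ?i = "inv\<^bsub>G'\<^esub> g"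
  have iG: "?i \<in> G" using group.inv_closed[OF grpG' nG] by simp
  have "?i \<otimes>\<^bsub>G'\<^esub> g = \<one>\<^bsub>G'\<^esub>" "g \<otimes>\<^bsub>G'\<^esub> ?i = \<one>\<^bsub>G'\<^esub>"
    using group.l_inv[OF grpG' nG] group.r_inv[OF grpG' nG] by auto
  then have "\<forall>x\<in>V. ?i (g x) = x \<and> g (?i x) = x"
    using multG'[OF iG n] multG'[OF n iG] oneG'
    by (metis restrict_apply')
  then show ?thesis using iG by blast
qed

lemma Nconj: "k \<in> G \<Longrightarrow> m \<in> N \<Longrightarrow> \<exists>m'\<in>N. \<forall>x\<in>V. k (m x) = m' (k x)"
proof -
  assume k: "k \<in> G" and m: "m \<in> N"
  have kG: "k \<in> carrier G'" using k by simp
  let ?m = "k \<otimes>\<^bsub>G'\<^esub> m \<otimes>\<^bsub>G'\<^esub> inv\<^bsub>G'\<^esub> k"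
  have mN: "?m \<in> N" using normal.inv_op_closed2[OF nor kG m] .
  have mG: "m \<in> carrier G'" using m NG by auto
  interpret grp: group G' by (rule grpG')
  have iG: "inv\<^bsub>G'\<^esub> k \<in> carrier G'" using kG by (rule grp.inv_closed)
  have "?m \<otimes>\<^bsub>G'\<^esub> k = k \<otimes>\<^bsub>G'\<^esub> m \<otimes>\<^bsub>G'\<^esub> (inv\<^bsub>G'\<^esub> k \<otimes>\<^bsub>G'\<^esub> k)"
    using grp.m_assoc[OF grp.m_closed[OF kG mG] iG kG] .
  also have "\<dots> = k \<otimes>\<^bsub>G'\<^esub> m"
    using grp.l_inv[OF kG] grp.r_one[OF grp.m_closed[OF kG mG]] by simp
  finally have "?m \<otimes>\<^bsub>G'\<^esub> k = k \<otimes>\<^bsub>G'\<^esub> m" .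
  then have "\<forall>x\<in>V. ?m (k x) = k (m x)"
    using multG'[OF NG[THEN subsetD, OF mN] k] multG'[OF k NG[THEN subsetD, OF m]] by metis
  then show ?thesis using mN by metis
qed

lemma Nfix: "n \<in> N \<Longrightarrow> u \<in> V \<Longrightarrow> n u = u \<Longrightarrow> x \<in> V \<Longrightarrow> n x = x"
proof -
  assume a: "n \<in> N" "u \<in> V" "n u = u" "x \<in> V"
  then have "n = \<one>\<^bsub>BijGroup V\<^esub>" using semi unfolding semiregular_def by blast
  then show ?thesis using a(4) by (simp add: BijGroup_def)
qed

lemma Nuniq: "n \<in> N \<Longrightarrow> n' \<in> N \<Longrightarrow> u \<in> V \<Longrightarrow> n u = n' u \<Longrightarrow> x \<in> V \<Longrightarrow> n x = n' x"
proof -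
  assume a: "n \<in> N" "n' \<in> N" "u \<in> V" "n u = n' u" "x \<in> V"
  obtain i where i: "i \<in> N" "\<forall>x\<in>V. i (n' x) = x \<and> n' (i x) = x" using Ninv a by blast
  obtain p where p: "p \<in> N" "\<forall>x\<in>V. p x = i (n x)" using Nmult[OF i(1) a(1)] by blast
  have "p u = u" using p i a by metis
  then have "p x = x" using Nfix p a by blast
  then have "i (n x) = x" using p a by auto
  then have "n' (i (n x)) = n' x" by simp
  moreover have "n x \<in> V" using a NG gV by blast
  ultimately show "n x = n' x" using i by auto
qed

end


context L begin

abbreviation "orb u \<equiv> orbit_of N u"
abbreviation "nb u \<equiv> neighbours V E u"
abbreviation "Orbs \<equiv> orbits V N"
abbreviation "Qn XX \<equiv> neighbours (orbits V N) (quot_adj E) XX"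
abbreviation "cntn u Y \<equiv> card (nb u \<inter> Y)"

lemma orb_mem: "v \<in> orb u \<longleftrightarrow> (\<exists>n\<in>N. v = n u)"
  by (auto simp: orbit_of_def)

lemma NV: "n \<in> N \<Longrightarrow> x \<in> V \<Longrightarrow> n x \<in> V"
  using NG gV by blast

lemma orb_self: "u \<in> V \<Longrightarrow> u \<in> orb u"
  using one_N orb_mem by fastforce

lemma orb_sub: "u \<in> V \<Longrightarrow> orb u \<subseteq> V"
  using NV orb_mem by auto

lemma orbN: "n \<in> N \<Longrightarrow> u \<in> V \<Longrightarrow> orb (n u) = orb u"
proof
  assume a: "n \<in> N" "u \<in> V"
  show "orb (n u) \<subseteq> orb u"
  proof
    fix x assume "x \<in> orb (n u)"
    then obtain m where m: "m \<in> N" "x = m (n u)" using orb_mem by blast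
    obtain p where p: "p \<in> N" "\<forall>x\<in>V. p x = m (n x)" using Nmult[OF m(1) a(1)] by blast
    then have "x = p u" using m a by auto
    then show "x \<in> orb u" using p(1) orb_mem by blast
  qed
  show "orb u \<subseteq> orb (n u)"
  proof
    fix x assume "x \<in> orb u"
    then obtain m where m: "m \<in> N" "x = m u" using orb_mem by blast
    obtain i where i: "i \<in> N" "\<forall>x\<in>V. i (n x) = x \<and> n (i x) = x" using Ninv a by blast
    obtain p where p: "p \<in> N" "\<forall>x\<in>V. p x = m (i x)" using Nmult[OF m(1) i(1)] by blast
    have "p (n u) = x" using p i m a NV by auto
    then show "x \<in> orb (n u)" using p orb_mem by auto
  qed
qed

lemma orb_eq: "u \<in> V \<Longrightarrow> v \<in> orb u \<Longrightarrow> orb v = orb u"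
  using orbN orb_mem by auto

lemma orb_disj: "u \<in> V \<Longrightarrow> v \<in> V \<Longrightarrow> x \<in> orb u \<Longrightarrow> x \<in> orb v \<Longrightarrow> orb u = orb v"
  using orb_eq by metis

lemma orbG: "g \<in> G \<Longrightarrow> u \<in> V \<Longrightarrow> g ` orb u = orb (g u)"
proof
  assume a: "g \<in> G" "u \<in> V"
  show "g ` orb u \<subseteq> orb (g u)"
  proof
    fix x assume "x \<in> g ` orb u"
    then obtain n where n: "n \<in> N" "x = g (n u)" using orb_mem by auto
    obtain n' where "n' \<in> N" "\<forall>x\<in>V. g (n x) = n' (g x)" using Nconj[OF a(1) n(1)] by blast
    then show "x \<in> orb (g u)" using n a orb_mem by auto
  qed
  show "orb (g u) \<subseteq> g ` orb u"
  proof
    fix x assume "x \<in> orb (g u)"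
    then obtain n where n: "n \<in> N" "x = n (g u)" using orb_mem by blast
    obtain g' where g': "g' \<in> G" "\<forall>x\<in>V. g' (g x) = x \<and> g (g' x) = x" using Ginv a by blast
    obtain n' where n': "n' \<in> N" "\<forall>x\<in>V. g' (n x) = n' (g' x)" using Nconj[OF g'(1) n(1)] by blast
    have guV: "g u \<in> V" using a gV by blast
    have "x = g (g' (n (g u)))" using n g' NV guV by auto
    also have "\<dots> = g (n' u)" using n' g' guV a by auto
    finally have "x = g (n' u)" .
    moreover have "n' u \<in> orb u" using n'(1) orb_mem by blast
    ultimately show "x \<in> g ` orb u" by blast
  qed
qed

lemma OO_mem: "XX \<in> Orbs \<longleftrightarrow> (\<exists>u\<in>V. XX = orb u)"
  by (auto simp: orbits_def)

lemma OO_eq: "XX \<in> Orbs \<Longrightarrow> y \<in> XX \<Longrightarrow> XX = orb y \<and> y \<in> V"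
proof -
  assume a: "XX \<in> Orbs" "y \<in> XX"
  then obtain u where u: "u \<in> V" "XX = orb u" unfolding OO_mem by blast
  then have "orb y = orb u" using orb_eq a by blast
  moreover have "y \<in> V" using orb_sub u a by blast
  ultimately show ?thesis using u by simp
qed

lemma finOO: "finite Orbs"
  using finV by (simp add: orbits_def)

lemma nb_mem: "w \<in> nb u \<longleftrightarrow> w \<in> V \<and> E u w"
  by (simp add: neighbours_def)

lemma nbG: "g \<in> G \<Longrightarrow> u \<in> V \<Longrightarrow> nb (g u) = g ` nb u"
proof
  assume a: "g \<in> G" "u \<in> V"
  show "g ` nb u \<subseteq> nb (g u)"
  proof
    fix x assume "x \<in> g ` nb u"
    then obtain w where w: "w \<in> nb u" "x = g w" by blast
    then have "w \<in> V" "E u w" unfolding nb_mem by auto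
    then have "g w \<in> V" "E (g u) (g w)" using gE[OF a(1) a(2)] gV[OF a(1)] by auto
    then show "x \<in> nb (g u)" unfolding nb_mem using w by simp
  qed
  show "nb (g u) \<subseteq> g ` nb u"
  proof
    fix x assume x: "x \<in> nb (g u)"
    then obtain w where w: "w \<in> V" "x = g w" using gimg[OF a(1)] nb_mem by blast
    then have "E (g u) (g w)" using x unfolding nb_mem by simp
    then have "E u w" using gE[OF a(1) a(2) w(1)] by simp
    then have "w \<in> nb u" using w(1) unfolding nb_mem by simp
    then show "x \<in> g ` nb u" using w(2) by blast
  qed
qed

lemma card_nb: "u \<in> V \<Longrightarrow> card (nb u) = 3"
  using cub by (simp add: cubic_def)

lemma fin_nb: "finite (nb u)"
  using finV by (simp add: neighbours_def)

lemma propag: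
  assumes "P \<alpha>" "\<And>u v. u \<in> V \<Longrightarrow> v \<in> V \<Longrightarrow> E u v \<Longrightarrow> P u \<Longrightarrow> P v" "v \<in> V"
  shows "P v"
proof -
  have "(\<lambda>x y. x \<in> V \<and> y \<in> V \<and> E x y)\<^sup>*\<^sup>* \<alpha> v" using conn aV assms(3) by (simp add: graph_connected_def)
  then show ?thesis
  proof (induction rule: rtranclp_induct)
    case base
    then show ?case using assms(1) .
  next
    case (step y z)
    then show ?case using assms(2)[of y z] by blast
  qed
qed

lemma Q_mem: "Y \<in> Qn XX \<longleftrightarrow> Y \<in> Orbs \<and> XX \<noteq> Y \<and> (\<exists>u\<in>XX. \<exists>v\<in>Y. E u v)"
  unfolding neighbours_def quot_adj_def by blast

lemma card_Q: "XX \<in> Orbs \<Longrightarrow> card (Qn XX) = 2"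
  using cyc by (simp add: is_cycle_def)

lemma gOO: "g \<in> G \<Longrightarrow> XX \<in> Orbs \<Longrightarrow> g ` XX \<in> Orbs"
proof -
  assume a: "g \<in> G" "XX \<in> Orbs"
  then obtain u where u: "u \<in> V" "XX = orb u" unfolding OO_mem by blast
  then have "g ` XX = orb (g u)" using orbG a by simp
  then show ?thesis unfolding OO_mem using gV a u by blast
qed

lemma nb_Q_ne: "u \<in> V \<Longrightarrow> Y \<in> Qn (orb u) \<Longrightarrow> nb u \<inter> Y \<noteq> {}"
proof -
  assume u: "u \<in> V" and Y: "Y \<in> Qn (orb u)"
  then obtain x y where xy: "x \<in> orb u" "y \<in> Y" "E x y" "Y \<in> Orbs" unfolding Q_mem by blast
  obtain n where n: "n \<in> N" "x = n u" using xy(1) unfolding orb_mem by blast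
  obtain i where i: "i \<in> N" "\<forall>x\<in>V. i (n x) = x \<and> n (i x) = x" using Ninv n by blast
  have yV: "y \<in> V" using xy EV by blast
  have xV: "x \<in> V" using xy EV by blast
  have iG: "i \<in> G" using i NG by blast
  have "E (i x) (i y)" using gE[OF iG xV yV] xy(3) by simp
  moreover have "i x = u" using n i u by auto
  moreover have "i y \<in> Y"
  proof -
    have "Y = orb y" using OO_eq[OF xy(4) xy(2)] by blast
    moreover have "i y \<in> orb y" using i(1) unfolding orb_mem by blast
    ultimately show ?thesis by simp
  qed
  ultimately have "i y \<in> nb u \<inter> Y" using NV[OF i(1) yV] by (simp add: nb_mem)
  then show ?thesis by blast
qed

lemma nb_cover: "u \<in> V \<Longrightarrow> w \<in> nb u \<Longrightarrow> orb w = orb u \<or> orb w \<in> Qn (orb u)"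
proof -
  assume u: "u \<in> V" and w: "w \<in> nb u"
  have wV: "w \<in> V" using w unfolding nb_mem by blast
  show ?thesis
  proof (cases "orb w = orb u")
    case False
    have "orb w \<in> Orbs" using wV unfolding OO_mem by blast
    moreover have "u \<in> orb u" "w \<in> orb w" "E u w" using u wV w orb_self unfolding nb_mem by auto
    ultimately have "orb w \<in> Qn (orb u)" using False unfolding Q_mem by blast
    then show ?thesis by blast
  qed simp
qed

lemma local_struct:
  assumes u: "u \<in> V"
  shows "\<exists>Y1 Y2. Qn (orb u) = {Y1, Y2} \<and> Y1 \<noteq> Y2 \<and> Y1 \<in> Orbs \<and> Y2 \<in> Orbs \<and> Y1 \<noteq> orb u \<and> Y2 \<noteq> orb u
     \<and> nb u \<subseteq> orb u \<union> Y1 \<union> Y2 \<and> cntn u Y1 \<ge> 1 \<and> cntn u Y2 \<ge> 1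
     \<and> cntn u (orb u) + cntn u Y1 + cntn u Y2 = 3"
proof -
  have "orb u \<in> Orbs" using u unfolding OO_mem by blast
  then have "card (Qn (orb u)) = 2" by (rule card_Q)
  then obtain Y1 Y2 where Q: "Qn (orb u) = {Y1, Y2}" "Y1 \<noteq> Y2" by (auto simp: card_2_iff)
  have "Y1 \<in> Qn (orb u)" "Y2 \<in> Qn (orb u)" using Q by auto
  then have Y: "Y1 \<in> Orbs" "Y2 \<in> Orbs" "Y1 \<noteq> orb u" "Y2 \<noteq> orb u" unfolding Q_mem by auto
  have cov: "nb u \<subseteq> orb u \<union> Y1 \<union> Y2"
  proof
    fix w assume w: "w \<in> nb u"
    then have "w \<in> V" unfolding nb_mem by simp
    then have "w \<in> orb w" by (rule orb_self)
    moreover have "orb w = orb u \<or> orb w \<in> {Y1, Y2}" using nb_cover[OF u w] Q by simp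
    ultimately show "w \<in> orb u \<union> Y1 \<union> Y2" by auto
  qed
  have c1: "cntn u Y1 \<ge> 1" "cntn u Y2 \<ge> 1"
  proof -
    have "nb u \<inter> Y1 \<noteq> {}" "nb u \<inter> Y2 \<noteq> {}" using nb_Q_ne[OF u] Q by blast+
    then show "cntn u Y1 \<ge> 1" "cntn u Y2 \<ge> 1" using fin_nb by (simp_all add: Suc_le_eq card_gt_0_iff)
  qed
  have d: "\<And>A B. A \<in> Orbs \<Longrightarrow> B \<in> Orbs \<Longrightarrow> A \<noteq> B \<Longrightarrow> A \<inter> B = {}"
  proof -
    fix A B assume ab: "A \<in> Orbs" "B \<in> Orbs" "A \<noteq> B"
    show "A \<inter> B = {}"
    proof (rule ccontr)
      assume "A \<inter> B \<noteq> {}"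
      then obtain x where x: "x \<in> A" "x \<in> B" by blast
      then show False using OO_eq[OF ab(1) x(1)] OO_eq[OF ab(2) x(2)] ab(3) by simp
    qed
  qed
  have e1: "orb u \<inter> Y1 = {}" "orb u \<inter> Y2 = {}" "Y1 \<inter> Y2 = {}"
    using d[OF \<open>orb u \<in> Orbs\<close> Y(1)] d[OF \<open>orb u \<in> Orbs\<close> Y(2)] d[OF Y(1) Y(2) Q(2)] Y by auto
  have "nb u = (nb u \<inter> orb u) \<union> (nb u \<inter> Y1) \<union> (nb u \<inter> Y2)" using cov by blast
  moreover have "card ((nb u \<inter> orb u) \<union> (nb u \<inter> Y1) \<union> (nb u \<inter> Y2))
      = card ((nb u \<inter> orb u) \<union> (nb u \<inter> Y1)) + cntn u Y2"
    by (rule card_Un_disjoint) (use fin_nb e1 in auto)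
  moreover have "card ((nb u \<inter> orb u) \<union> (nb u \<inter> Y1)) = cntn u (orb u) + cntn u Y1"
    by (rule card_Un_disjoint) (use fin_nb e1 in auto)
  ultimately have "card (nb u) = cntn u (orb u) + cntn u Y1 + cntn u Y2" by simp
  then have c3: "cntn u (orb u) + cntn u Y1 + cntn u Y2 = 3" using card_nb u by simp
  show ?thesis
    by (rule exI[of _ Y1], rule exI[of _ Y2]) (simp only: Q Y cov c1 c3 simp_thms)
qed

end


context L begin

abbreviation "idV \<equiv> (\<lambda>x\<in>V. x)"

lemma one_G: "idV \<in> G"
  using subsetD[OF NG one_N] .

lemma orbits_sub: "Y \<in> Orbs \<Longrightarrow> Y \<subseteq> V"
proof
  fix y assume a: "Y \<in> Orbs" "y \<in> Y"
  show "y \<in> V" using OO_eq[OF a] by simp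
qed

lemma cntG: "g \<in> G \<Longrightarrow> u \<in> V \<Longrightarrow> Y \<in> Orbs \<Longrightarrow> cntn (g u) (g ` Y) = cntn u Y"
proof -
  assume a: "g \<in> G" "u \<in> V" "Y \<in> Orbs"
  have "nb (g u) \<inter> g ` Y = g ` (nb u \<inter> Y)"
    using nbG[OF a(1) a(2)] inj_on_image_Int[OF ginj[OF a(1)], of "nb u" Y] orbits_sub[OF a(3)]
    by (simp add: neighbours_def)
  moreover have "inj_on g (nb u \<inter> Y)" by (rule inj_on_subset[OF ginj[OF a(1)]]) (auto simp: neighbours_def)
  ultimately show ?thesis by (simp add: card_image)
qed

lemma orb_in: "u \<in> V \<Longrightarrow> orb u \<in> Orbs"
  unfolding OO_mem by blast

lemma b_const: "u \<in> V \<Longrightarrow> cntn u (orb u) = cntn \<alpha> (orb \<alpha>)"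
proof -
  assume u: "u \<in> V"
  obtain g where g: "g \<in> G" "g \<alpha> = u" using vt aV u unfolding vertex_transitive_def by blast
  have "cntn (g \<alpha>) (g ` orb \<alpha>) = cntn \<alpha> (orb \<alpha>)" using cntG[OF g(1) aV orb_in[OF aV]] .
  then show ?thesis using orbG[OF g(1) aV] g(2) by simp
qed

lemma QnG: "g \<in> G \<Longrightarrow> XX \<in> Orbs \<Longrightarrow> Z \<in> Qn XX \<Longrightarrow> g ` Z \<in> Qn (g ` XX)"
proof -
  assume a: "g \<in> G" "XX \<in> Orbs" "Z \<in> Qn XX"
  then have z: "Z \<in> Orbs" "XX \<noteq> Z" "\<exists>x\<in>XX. \<exists>z\<in>Z. E x z" unfolding Q_mem by auto
  have "g ` Z \<in> Orbs" using gOO[OF a(1) z(1)] .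
  moreover have "g ` XX \<noteq> g ` Z"
    using z(2) inj_on_image_eq_iff[OF ginj[OF a(1)] orbits_sub[OF a(2)] orbits_sub[OF z(1)]] by simp
  moreover have "\<exists>x\<in>g ` XX. \<exists>z\<in>g ` Z. E x z"
  proof -
    obtain x z where xz: "x \<in> XX" "z \<in> Z" "E x z" using z(3) by blast
    then have "E (g x) (g z)" using gE[OF a(1)] EV[OF xz(3)] by simp
    then show ?thesis using xz by blast
  qed
  ultimately show ?thesis unfolding Q_mem by blast
qed

lemma Q_sym: "u \<in> V \<Longrightarrow> v \<in> V \<Longrightarrow> E u v \<Longrightarrow> orb v \<noteq> orb u \<Longrightarrow> orb u \<in> Qn (orb v)"
proof -
  assume a: "u \<in> V" "v \<in> V" "E u v" "orb v \<noteq> orb u"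
  have "v \<in> orb v" "u \<in> orb u" "E v u" using a orb_self Esym by auto
  then show ?thesis unfolding Q_mem using orb_in[OF a(1)] a(4) by blast
qed

lemma Q_of_edge: "u \<in> V \<Longrightarrow> v \<in> V \<Longrightarrow> E u v \<Longrightarrow> orb v \<noteq> orb u \<Longrightarrow> orb v \<in> Qn (orb u)"
proof -
  assume a: "u \<in> V" "v \<in> V" "E u v" "orb v \<noteq> orb u"
  have "E v u" using Esym[OF a(3)] .
  then show ?thesis using Q_sym[of v u] a by simp
qed

lemma ext_eq: "g1 \<in> G \<Longrightarrow> g2 \<in> G \<Longrightarrow> (\<And>v. v \<in> V \<Longrightarrow> g1 v = g2 v) \<Longrightarrow> g1 = g2"
  by (rule extensionalityI[OF gext gext])

lemma two_elem: "card S = 2 \<Longrightarrow> a \<in> S \<Longrightarrow> b \<in> S \<Longrightarrow> c \<in> S \<Longrightarrow> b \<noteq> a \<Longrightarrow> c \<noteq> a \<Longrightarrow> b = c"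
proof -
  assume a: "card S = 2" "a \<in> S" "b \<in> S" "c \<in> S" "b \<noteq> a" "c \<noteq> a"
  then obtain x y where "S = {x, y}" unfolding card_2_iff by blast
  then show ?thesis using a(2-6) by blast
qed

section \<open>Case A: one neighbour in own orbit\<close>

context
  assumes bA: "cntn \<alpha> (orb \<alpha>) = 1"
begin

lemma uniqA: "u \<in> V \<Longrightarrow> (Y = orb u \<or> Y \<in> Qn (orb u)) \<Longrightarrow> cntn u Y = 1"
proof -
  assume u: "u \<in> V" and Y: "Y = orb u \<or> Y \<in> Qn (orb u)"
  obtain Y1 Y2 where s: "Qn (orb u) = {Y1, Y2}" "Y1 \<noteq> Y2" "Y1 \<in> Orbs" "Y2 \<in> Orbs" "Y1 \<noteq> orb u" "Y2 \<noteq> orb u"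
     "nb u \<subseteq> orb u \<union> Y1 \<union> Y2" "cntn u Y1 \<ge> 1" "cntn u Y2 \<ge> 1"
     "cntn u (orb u) + cntn u Y1 + cntn u Y2 = 3"
    using local_struct[OF u] by blast
  have "cntn u (orb u) = 1" using b_const[OF u] bA by simp
  then show ?thesis using s(1,8,9,10) Y by auto
qed

lemma singA: "u \<in> V \<Longrightarrow> v \<in> nb u \<Longrightarrow> nb u \<inter> orb v = {v}"
proof -
  assume u: "u \<in> V" and v: "v \<in> nb u"
  have vV: "v \<in> V" "E u v" using v by (auto simp: nb_mem)
  have "orb v = orb u \<or> orb v \<in> Qn (orb u)" using nb_cover[OF u v] .
  then have c: "cntn u (orb v) = 1" using uniqA[OF u] by blast
  have m: "v \<in> nb u \<inter> orb v" using v orb_self[OF vV(1)] by blast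
  from c obtain x where x: "nb u \<inter> orb v = {x}" by (rule card_1_singletonE)
  then show ?thesis using m by auto
qed

lemma propA:
  assumes g: "g1 \<in> G" "g2 \<in> G" and base: "g1 \<alpha> = g2 \<alpha>" "\<forall>Y\<in>Qn (orb \<alpha>). g1 ` Y = g2 ` Y"
  shows "g1 = g2"
proof -
  let ?P = "\<lambda>v. g1 v = g2 v \<and> (\<forall>Y\<in>Qn (orb v). g1 ` Y = g2 ` Y)"
  have step: "?P v" if uv: "u \<in> V" "v \<in> V" "E u v" and Pu: "?P u" for u v
  proof -
    have vnb: "v \<in> nb u" using uv by (simp add: nb_mem)
    have ou: "g1 ` orb u = g2 ` orb u" using orbG[OF g(1) uv(1)] orbG[OF g(2) uv(1)] Pu by simp
    have W: "g1 ` orb v = g2 ` orb v"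
    proof (cases "orb v = orb u")
      case True then show ?thesis using ou by simp
    next
      case False
      then have "orb v \<in> Qn (orb u)" using nb_cover[OF uv(1) vnb] by simp
      then show ?thesis using Pu by blast
    qed
    have s: "nb u \<inter> orb v = {v}" using singA[OF uv(1) vnb] .
    have "nb (g1 u) \<inter> g1 ` orb v = g1 ` (nb u \<inter> orb v)"
      using nbG[OF g(1) uv(1)] inj_on_image_Int[OF ginj[OF g(1)], of "nb u" "orb v"] orb_sub[OF uv(2)]
      by (simp add: neighbours_def)
    moreover have "nb (g2 u) \<inter> g2 ` orb v = g2 ` (nb u \<inter> orb v)"
      using nbG[OF g(2) uv(1)] inj_on_image_Int[OF ginj[OF g(2)], of "nb u" "orb v"] orb_sub[OF uv(2)]
      by (simp add: neighbours_def)
    ultimately have "{g1 v} = {g2 v}" using s W Pu by simp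
    then have eqv: "g1 v = g2 v" by simp
    have "\<forall>Y\<in>Qn (orb v). g1 ` Y = g2 ` Y"
    proof (cases "orb v = orb u")
      case True then show ?thesis using Pu by simp
    next
      case False
      have uQ: "orb u \<in> Qn (orb v)" using Q_sym[OF uv False] .
      show ?thesis
      proof
        fix Y assume Y: "Y \<in> Qn (orb v)"
        show "g1 ` Y = g2 ` Y"
        proof (cases "Y = orb u")
          case True then show ?thesis using ou by simp
        next
          case False
          have YO: "Y \<in> Orbs" using Y unfolding Q_mem by blast
          have oO: "orb v \<in> Orbs" "orb u \<in> Orbs" using orb_in uv by auto
          have c2: "card (Qn (g1 ` orb v)) = 2" using card_Q gOO[OF g(1) oO(1)] by blast
          have m1: "g1 ` Y \<in> Qn (g1 ` orb v)" using QnG[OF g(1) oO(1) Y] .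
          have m2: "g2 ` Y \<in> Qn (g1 ` orb v)" using QnG[OF g(2) oO(1) Y] W by simp
          have m3: "g1 ` orb u \<in> Qn (g1 ` orb v)" using QnG[OF g(1) oO(1) uQ] .
          have n1: "g1 ` Y \<noteq> g1 ` orb u"
            using False inj_on_image_eq_iff[OF ginj[OF g(1)] orbits_sub[OF YO] orbits_sub[OF oO(2)]] by simp
          have n2: "g2 ` Y \<noteq> g1 ` orb u"
            using False inj_on_image_eq_iff[OF ginj[OF g(2)] orbits_sub[OF YO] orbits_sub[OF oO(2)]] ou by simp
          show ?thesis using two_elem[OF c2 m3 m1 m2 n1 n2] .
        qed
      qed
    qed
    then show ?thesis using eqv by simp
  qed
  have b0: "?P \<alpha>" using base by blast
  have "?P v" if "v \<in> V" for v
    using propag[where P = ?P, OF b0 step that] .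
  then show ?thesis using ext_eq[OF g] by blast
qed

lemma caseA_card: "card (stab G \<alpha>) \<le> 2"
proof -
  obtain Y1 Y2 where s: "Qn (orb \<alpha>) = {Y1, Y2}" "Y1 \<noteq> Y2" "Y1 \<in> Orbs" "Y2 \<in> Orbs"
    using local_struct[OF aV] by blast
  have oa: "orb \<alpha> \<in> Orbs" using orb_in aV by blast
  have img: "g ` Y \<in> Qn (orb \<alpha>)" if "g \<in> stab G \<alpha>" "Y \<in> Qn (orb \<alpha>)" for g Y
  proof -
    have gG: "g \<in> G" "g \<alpha> = \<alpha>" using that(1) unfolding stab_def by auto
    have "g ` orb \<alpha> = orb \<alpha>" using orbG[OF gG(1) aV] gG(2) by simp
    then show ?thesis using QnG[OF gG(1) oa that(2)] by simp
  qed
  have "inj_on (\<lambda>g. g ` Y1) (stab G \<alpha>)"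
  proof (rule inj_onI)
    fix g1 g2 assume g: "g1 \<in> stab G \<alpha>" "g2 \<in> stab G \<alpha>" "g1 ` Y1 = g2 ` Y1"
    have gG: "g1 \<in> G" "g2 \<in> G" "g1 \<alpha> = \<alpha>" "g2 \<alpha> = \<alpha>" using g by (auto simp: stab_def)
    have c2: "card (Qn (orb \<alpha>)) = 2" using card_Q oa by blast
    have Y1Q: "Y1 \<in> Qn (orb \<alpha>)" "Y2 \<in> Qn (orb \<alpha>)" using s by auto
    have n1: "g1 ` Y2 \<noteq> g1 ` Y1"
      using s(2) inj_on_image_eq_iff[OF ginj[OF gG(1)] orbits_sub[OF s(4)] orbits_sub[OF s(3)]] by simp
    have n2: "g2 ` Y2 \<noteq> g1 ` Y1"
      using s(2) inj_on_image_eq_iff[OF ginj[OF gG(2)] orbits_sub[OF s(4)] orbits_sub[OF s(3)]] g(3) by simp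
    have "g1 ` Y2 = g2 ` Y2"
      using two_elem[OF c2 img[OF g(1) Y1Q(1)] img[OF g(1) Y1Q(2)] img[OF g(2) Y1Q(2)] n1 n2] .
    then have "\<forall>Y\<in>Qn (orb \<alpha>). g1 ` Y = g2 ` Y" using s(1) g(3) by auto
    then show "g1 = g2" using propA[OF gG(1) gG(2)] gG by simp
  qed
  moreover have "(\<lambda>g. g ` Y1) ` stab G \<alpha> \<subseteq> Qn (orb \<alpha>)"
  proof
    fix Z assume "Z \<in> (\<lambda>g. g ` Y1) ` stab G \<alpha>"
    then obtain g where "g \<in> stab G \<alpha>" "Z = g ` Y1" by blast
    moreover have "Y1 \<in> Qn (orb \<alpha>)" using s(1) by simp
    ultimately show "Z \<in> Qn (orb \<alpha>)" using img by simp
  qed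
  moreover have "finite (Qn (orb \<alpha>))"
  proof -
    have "card (Qn (orb \<alpha>)) = 2" using card_Q oa by blast
    then show ?thesis by (intro card_ge_0_finite) simp
  qed
  ultimately have "card (stab G \<alpha>) \<le> card (Qn (orb \<alpha>))" by (rule card_inj_on_le)
  then show ?thesis using card_Q oa by simp
qed

lemma caseA_K: "stab (orbit_kernel V G N) \<alpha> = {\<one>\<^bsub>BijGroup V\<^esub>}"
proof -
  have one: "\<one>\<^bsub>BijGroup V\<^esub> = idV" by (simp add: BijGroup_def)
  have idimg: "idV ` Y = Y" if "Y \<in> Orbs" for Y
  proof -
    have "Y \<subseteq> V" using orbits_sub[OF that] .
    then have "\<forall>y\<in>Y. idV y = y" by auto
    then show ?thesis by (simp add: image_cong)
  qed
  have "k = idV" if k: "k \<in> stab (orbit_kernel V G N) \<alpha>" for k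
  proof -
    have kk: "k \<in> G" "k \<alpha> = \<alpha>" "\<forall>B\<in>Orbs. k ` B = B" using k unfolding stab_def orbit_kernel_def by auto
    have "\<forall>Y\<in>Qn (orb \<alpha>). k ` Y = idV ` Y"
    proof
      fix Y assume "Y \<in> Qn (orb \<alpha>)"
      then have "Y \<in> Orbs" unfolding Q_mem by blast
      then show "k ` Y = idV ` Y" using kk idimg by simp
    qed
    moreover have "k \<alpha> = idV \<alpha>" using kk(2) aV by simp
    ultimately show ?thesis using propA[OF kk(1) one_G] by blast
  qed
  moreover have "idV \<in> stab (orbit_kernel V G N) \<alpha>"
    unfolding stab_def orbit_kernel_def using one_G aV idimg by simp
  ultimately show ?thesis unfolding one by blast
qed

end

end


context L begin

abbreviation "KK \<equiv> orbit_kernel V G N"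

lemma KG: "k \<in> KK \<Longrightarrow> k \<in> G"
  unfolding orbit_kernel_def by simp

lemma Korb: "k \<in> KK \<Longrightarrow> B \<in> Orbs \<Longrightarrow> k ` B = B"
  unfolding orbit_kernel_def by simp

lemma KN: "k \<in> KK \<Longrightarrow> u \<in> V \<Longrightarrow> \<exists>n\<in>N. k u = n u"
proof -
  assume k: "k \<in> KK" and u: "u \<in> V"
  have "k ` orb u = orb u" using Korb[OF k orb_in[OF u]] .
  then have "k u \<in> orb u" using orb_self[OF u] by blast
  then show ?thesis unfolding orb_mem by blast
qed

lemma NnbG: "n \<in> N \<Longrightarrow> u \<in> V \<Longrightarrow> nb (n u) = n ` nb u"
  using nbG NG by blast

lemma K_nb: "k \<in> KK \<Longrightarrow> u \<in> V \<Longrightarrow> v \<in> nb u \<Longrightarrow> n \<in> N \<Longrightarrow> k u = n u \<Longrightarrow> \<exists>w\<in>nb u \<inter> orb v. k v = n w"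
proof -
  assume a: "k \<in> KK" "u \<in> V" "v \<in> nb u" "n \<in> N" "k u = n u"
  have vV: "v \<in> V" "E u v" using a(3) by (auto simp: nb_mem)
  have kG: "k \<in> G" using KG[OF a(1)] .
  have "k v \<in> nb (k u)" using nbG[OF kG a(2)] a(3) by blast
  then have "k v \<in> n ` nb u" using NnbG[OF a(4) a(2)] a(5) by simp
  then obtain w where w: "w \<in> nb u" "k v = n w" by blast
  have wV: "w \<in> V" using w(1) by (simp add: nb_mem)
  have "k ` orb v = orb v" using Korb[OF a(1) orb_in[OF vV(1)]] .
  then have "k v \<in> orb v" using orb_self[OF vV(1)] by blast
  then have "orb (k v) = orb v" using orb_eq[OF vV(1)] by blast
  moreover have "orb (n w) = orb w" using orbN[OF a(4) wV] .
  ultimately have "orb w = orb v" using w(2) by simp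
  then have "w \<in> orb v" using orb_self[OF wV] by simp
  then show ?thesis using w by blast
qed

definition straight :: "('a \<Rightarrow> 'a) \<Rightarrow> 'a \<Rightarrow> 'a \<Rightarrow> bool" where
  "straight k u v \<longleftrightarrow> (\<exists>n\<in>N. k u = n u \<and> k v = n v)"

lemma straight_sym: "straight k u v \<longleftrightarrow> straight k v u"
  unfolding straight_def by blast

lemma straight_iff: "n \<in> N \<Longrightarrow> u \<in> V \<Longrightarrow> v \<in> V \<Longrightarrow> k u = n u \<Longrightarrow> straight k u v \<longleftrightarrow> k v = n v"
proof -
  assume a: "n \<in> N" "u \<in> V" "v \<in> V" "k u = n u"
  show ?thesis
  proof
    assume "straight k u v"
    then obtain n' where n': "n' \<in> N" "k u = n' u" "k v = n' v" unfolding straight_def by blast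
    have "n' v = n v" using Nuniq[OF n'(1) a(1) a(2) _ a(3)] n'(2) a(4) by simp
    then show "k v = n v" using n'(3) by simp
  next
    assume "k v = n v"
    then show "straight k u v" unfolding straight_def using a(1) a(4) by blast
  qed
qed

lemma le2_elem: "finite S \<Longrightarrow> card S \<le> 2 \<Longrightarrow> v \<in> S \<Longrightarrow> w \<in> S \<Longrightarrow> x \<in> S \<Longrightarrow> v \<noteq> w \<Longrightarrow> x \<noteq> w \<Longrightarrow> x = v"
proof (rule ccontr)
  assume a: "finite S" "card S \<le> 2" "v \<in> S" "w \<in> S" "x \<in> S" "v \<noteq> w" "x \<noteq> w" "x \<noteq> v"
  have "{v, w, x} \<subseteq> S" using a by blast
  then have "card {v, w, x} \<le> card S" using a(1) card_mono by blast
  moreover have "card {v, w, x} = 3" using a(6-8) by auto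
  ultimately show False using a(2) by simp
qed

context
  assumes bB: "cntn \<alpha> (orb \<alpha>) = 0"
begin

lemma profB: "u \<in> V \<Longrightarrow> \<exists>D S. Qn (orb u) = {D, S} \<and> D \<noteq> S \<and> cntn u D = 2 \<and> cntn u S = 1"
proof -
  assume u: "u \<in> V"
  obtain Y1 Y2 where s: "Qn (orb u) = {Y1, Y2}" "Y1 \<noteq> Y2" "cntn u Y1 \<ge> 1" "cntn u Y2 \<ge> 1"
     "cntn u (orb u) + cntn u Y1 + cntn u Y2 = 3"
    using local_struct[OF u] by blast
  have "cntn u (orb u) = 0" using b_const[OF u] bB by simp
  then have "cntn u Y1 + cntn u Y2 = 3" using s(5) by simp
  then have "(cntn u Y1 = 2 \<and> cntn u Y2 = 1) \<or> (cntn u Y1 = 1 \<and> cntn u Y2 = 2)" using s(3,4) by linarith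
  then show ?thesis
  proof
    assume "cntn u Y1 = 2 \<and> cntn u Y2 = 1"
    then show ?thesis using s(1,2) by blast
  next
    assume "cntn u Y1 = 1 \<and> cntn u Y2 = 2"
    then have "Qn (orb u) = {Y2, Y1} \<and> Y2 \<noteq> Y1 \<and> cntn u Y2 = 2 \<and> cntn u Y1 = 1" using s(1,2) by auto
    then show ?thesis by blast
  qed
qed

lemma own_empty: "u \<in> V \<Longrightarrow> nb u \<inter> orb u = {}"
proof -
  assume u: "u \<in> V"
  have "cntn u (orb u) = 0" using b_const[OF u] bB by simp
  then show ?thesis using fin_nb by simp
qed

lemma nb_Q: "u \<in> V \<Longrightarrow> v \<in> nb u \<Longrightarrow> orb v \<in> Qn (orb u)"
proof -
  assume u: "u \<in> V" and v: "v \<in> nb u"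
  have "v \<notin> orb u" using own_empty[OF u] v by blast
  moreover have "v \<in> orb v" using v orb_self by (simp add: nb_mem)
  ultimately have "orb v \<noteq> orb u" by auto
  then show ?thesis using nb_cover[OF u v] by simp
qed

lemma cnt12: "u \<in> V \<Longrightarrow> Y \<in> Qn (orb u) \<Longrightarrow> cntn u Y = 1 \<or> cntn u Y = 2"
  using profB by fastforce

lemma cnt_inj: "u \<in> V \<Longrightarrow> Y \<in> Qn (orb u) \<Longrightarrow> Y' \<in> Qn (orb u) \<Longrightarrow> cntn u Y = cntn u Y' \<Longrightarrow> Y = Y'"
proof -
  assume a: "u \<in> V" "Y \<in> Qn (orb u)" "Y' \<in> Qn (orb u)" "cntn u Y = cntn u Y'"
  obtain D S where s: "Qn (orb u) = {D, S}" "D \<noteq> S" "cntn u D = 2" "cntn u S = 1" using profB[OF a(1)] by blast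
  show ?thesis using a(2-4) s by auto
qed

lemma cnt_le2: "u \<in> V \<Longrightarrow> Y \<in> Orbs \<Longrightarrow> cntn u Y \<le> 2"
proof (cases "nb u \<inter> Y = {}")
  case False
  assume u: "u \<in> V" and Y: "Y \<in> Orbs"
  then obtain w where w: "w \<in> nb u" "w \<in> Y" using False by blast
  have "Y = orb w" using OO_eq[OF Y w(2)] by simp
  then have "Y \<in> Qn (orb u)" using nb_Q[OF u w(1)] by simp
  then show ?thesis using cnt12[OF u] by fastforce
qed simp

lemma cntN: "n \<in> N \<Longrightarrow> u \<in> V \<Longrightarrow> Y \<in> Orbs \<Longrightarrow> cntn (n u) Y = cntn u Y"
proof -
  assume a: "n \<in> N" "u \<in> V" "Y \<in> Orbs"
  obtain y where y: "y \<in> V" "Y = orb y" using a(3) unfolding OO_mem by blast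
  have "n ` Y = Y" using orbG[OF subsetD[OF NG a(1)] y(1)] orbN[OF a(1) y(1)] y(2) by simp
  then show ?thesis using cntG[OF subsetD[OF NG a(1)] a(2) a(3)] by simp
qed

lemma cnt_orb: "u \<in> V \<Longrightarrow> u' \<in> V \<Longrightarrow> orb u = orb u' \<Longrightarrow> Y \<in> Orbs \<Longrightarrow> cntn u Y = cntn u' Y"
proof -
  assume a: "u \<in> V" "u' \<in> V" "orb u = orb u'" "Y \<in> Orbs"
  have "u' \<in> orb u" using a orb_self by simp
  then obtain n where "n \<in> N" "u' = n u" unfolding orb_mem by blast
  then show ?thesis using cntN a by simp
qed

lemma fin_int: "finite (nb u \<inter> Y)"
  using fin_nb by simp

lemma S_straight: "k \<in> KK \<Longrightarrow> u \<in> V \<Longrightarrow> v \<in> nb u \<Longrightarrow> cntn u (orb v) = 1 \<Longrightarrow> straight k u v"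
proof -
  assume a: "k \<in> KK" "u \<in> V" "v \<in> nb u" "cntn u (orb v) = 1"
  obtain n where n: "n \<in> N" "k u = n u" using KN[OF a(1) a(2)] by blast
  obtain w where w: "w \<in> nb u \<inter> orb v" "k v = n w" using K_nb[OF a(1) a(2) a(3) n] by blast
  have vV: "v \<in> V" using a(3) by (simp add: nb_mem)
  have vm: "v \<in> nb u \<inter> orb v" using a(3) orb_self[OF vV] by blast
  from a(4) obtain x where x: "nb u \<inter> orb v = {x}" by (rule card_1_singletonE)
  have "w = v" using x vm w(1) by auto
  then show ?thesis unfolding straight_def using n w(2) by blast
qed

lemma SI1: "k \<in> KK \<Longrightarrow> u \<in> V \<Longrightarrow> v \<in> nb u \<Longrightarrow> w \<in> nb u \<inter> orb v \<Longrightarrow> straight k u v \<Longrightarrow> straight k u w"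
proof -
  assume a: "k \<in> KK" "u \<in> V" "v \<in> nb u" "w \<in> nb u \<inter> orb v" "straight k u v"
  obtain n where n: "n \<in> N" "k u = n u" using KN[OF a(1) a(2)] by blast
  have vV: "v \<in> V" using a(3) by (simp add: nb_mem)
  have wV: "w \<in> V" "w \<in> nb u" using a(4) by (auto simp: nb_mem)
  have ow: "orb w = orb v" using orb_eq[OF vV] a(4) by blast
  have kv: "k v = n v" using straight_iff[of n u v k, OF n(1) a(2) vV n(2)] a(5) by simp
  show ?thesis
  proof (cases "w = v")
    case True then show ?thesis using a(5) by simp
  next
    case False
    obtain w' where w': "w' \<in> nb u \<inter> orb w" "k w = n w'" using K_nb[OF a(1) a(2) wV(2) n] by blast
    have S: "finite (nb u \<inter> orb v)" "card (nb u \<inter> orb v) \<le> 2"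
      using fin_nb cnt_le2[OF a(2) orb_in[OF vV]] by auto
    have vm: "v \<in> nb u \<inter> orb v" using a(3) orb_self[OF vV] by blast
    have w'm: "w' \<in> nb u \<inter> orb v" using w'(1) ow by simp
    show ?thesis
    proof (cases "w' = w")
      case True then show ?thesis using straight_iff[of n u w k, OF n(1) a(2) wV(1) n(2)] w'(2) by simp
    next
      case False
      have "w' = v" using le2_elem[OF S vm a(4) w'm] \<open>w \<noteq> v\<close> False by auto
      then have "k w = k v" using w'(2) kv by simp
      then have "w = v" using inj_onD[OF ginj[OF KG[OF a(1)]]] wV(1) vV by blast
      then show ?thesis using \<open>w \<noteq> v\<close> by simp
    qed
  qed
qed

lemma SI2: "k \<in> KK \<Longrightarrow> m \<in> N \<Longrightarrow> u \<in> V \<Longrightarrow> v \<in> V \<Longrightarrow> straight k u v \<Longrightarrow> straight k (m u) (m v)"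
proof -
  assume a: "k \<in> KK" "m \<in> N" "u \<in> V" "v \<in> V" "straight k u v"
  obtain n where n: "n \<in> N" "k u = n u" "k v = n v" using a(5) unfolding straight_def by blast
  obtain m' where m': "m' \<in> N" "\<forall>x\<in>V. k (m x) = m' (k x)" using Nconj[OF KG[OF a(1)] a(2)] by blast
  obtain i where i: "i \<in> N" "\<forall>x\<in>V. i (m x) = x \<and> m (i x) = x" using Ninv[OF a(2)] by blast
  obtain p1 where p1: "p1 \<in> N" "\<forall>x\<in>V. p1 x = n (i x)" using Nmult[OF n(1) i(1)] by blast
  obtain p where p: "p \<in> N" "\<forall>x\<in>V. p x = m' (p1 x)" using Nmult[OF m'(1) p1(1)] by blast
  have "k (m u) = p (m u)" using m' p p1 i n a NV by auto
  moreover have "k (m v) = p (m v)" using m' p p1 i n a NV by auto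
  ultimately show ?thesis unfolding straight_def using p(1) by blast
qed

lemma SI2': "k \<in> KK \<Longrightarrow> m \<in> N \<Longrightarrow> u \<in> V \<Longrightarrow> v \<in> V \<Longrightarrow> straight k (m u) (m v) \<Longrightarrow> straight k u v"
proof -
  assume a: "k \<in> KK" "m \<in> N" "u \<in> V" "v \<in> V" "straight k (m u) (m v)"
  obtain i where i: "i \<in> N" "\<forall>x\<in>V. i (m x) = x \<and> m (i x) = x" using Ninv[OF a(2)] by blast
  have "straight k (i (m u)) (i (m v))" using SI2[OF a(1) i(1) NV[OF a(2) a(3)] NV[OF a(2) a(4)] a(5)] .
  then show ?thesis using i a by simp
qed

lemma SI3: "k \<in> KK \<Longrightarrow> u \<in> V \<Longrightarrow> v \<in> nb u \<Longrightarrow> u' \<in> orb u \<Longrightarrow> v' \<in> nb u' \<Longrightarrow> orb v' = orb v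
   \<Longrightarrow> straight k u v \<Longrightarrow> straight k u' v'"
proof -
  assume a: "k \<in> KK" "u \<in> V" "v \<in> nb u" "u' \<in> orb u" "v' \<in> nb u'" "orb v' = orb v" "straight k u v"
  obtain m where m: "m \<in> N" "u' = m u" using a(4) unfolding orb_mem by blast
  have "v' \<in> m ` nb u" using a(5) NnbG[OF m(1) a(2)] m(2) by simp
  then obtain w where w: "w \<in> nb u" "v' = m w" by blast
  have wV: "w \<in> V" using w(1) by (simp add: nb_mem)
  have "orb w = orb v" using orbN[OF m(1) wV] w(2) a(6) by simp
  then have "w \<in> nb u \<inter> orb v" using w(1) orb_self[OF wV] by simp
  then have "straight k u w" using SI1[OF a(1) a(2) a(3) _ a(7)] by blast
  then show ?thesis using SI2[OF a(1) m(1) a(2) wV] m(2) w(2) by simp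
qed

end

end


context L begin
context
  assumes bB: "cntn \<alpha> (orb \<alpha>) = 0"
begin

lemma K_invol: "k \<in> KK \<Longrightarrow> k \<alpha> = \<alpha> \<Longrightarrow> x \<in> V \<Longrightarrow> k (k x) = x"
proof -
  assume k: "k \<in> KK" "k \<alpha> = \<alpha>" and x: "x \<in> V"
  have kG: "k \<in> G" using KG[OF k(1)] .
  have step: "k (k v) = v" if uv: "u \<in> V" "v \<in> V" "E u v" and Pu: "k (k u) = u" for u v
  proof -
    have vnb: "v \<in> nb u" using uv by (simp add: nb_mem)
    obtain n where n: "n \<in> N" "k u = n u" using KN[OF k(1) uv(1)] by blast
    obtain n' where n': "n' \<in> N" "\<forall>x\<in>V. k (n x) = n' (k x)" using Nconj[OF kG n(1)] by blast
    obtain p where p: "p \<in> N" "\<forall>x\<in>V. p x = n' (n x)" using Nmult[OF n'(1) n(1)] by blast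
    have "k (k u) = n' (n u)" using n n' uv by simp
    then have "p u = u" using p Pu uv by simp
    then have nn: "\<And>x. x \<in> V \<Longrightarrow> n' (n x) = x" using Nfix[OF p(1) uv(1)] p by simp
    obtain w where w: "w \<in> nb u \<inter> orb v" "k v = n w" using K_nb[OF k(1) uv(1) vnb n] by blast
    have wV: "w \<in> V" "w \<in> nb u" using w(1) by (auto simp: nb_mem)
    show ?thesis
    proof (cases "w = v")
      case True
      then show ?thesis using w(2) n' nn uv by simp
    next
      case False
      obtain w'' where w'': "w'' \<in> nb u \<inter> orb w" "k w = n w''" using K_nb[OF k(1) uv(1) wV(2) n] by blast
      have ow: "orb w = orb v" using orb_eq[OF uv(2), of w] w(1) by simp
      have S: "finite (nb u \<inter> orb v)" "card (nb u \<inter> orb v) \<le> 2"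
        using fin_nb cnt_le2[OF bB uv(1) orb_in[OF uv(2)]] by auto
      have vm: "v \<in> nb u \<inter> orb v" using vnb orb_self[OF uv(2)] by blast
      have w''m: "w'' \<in> nb u \<inter> orb v" using w''(1) ow by simp
      have "w'' \<noteq> w"
      proof
        assume "w'' = w"
        then have "k w = k v" using w''(2) w(2) by simp
        then show False using inj_onD[OF ginj[OF kG]] wV(1) uv(2) False by blast
      qed
      then have "w'' = v" using le2_elem[OF S vm w(1) w''m] False by auto
      then have "k w = n v" using w''(2) by simp
      then show ?thesis using w(2) n' nn uv wV by simp
    qed
  qed
  have b0: "k (k \<alpha>) = \<alpha>" using k(2) by simp
  show ?thesis using propag[where P = "\<lambda>u. k (k u) = u", OF b0 step x] .
qed

lemma K_eq:
  assumes k: "k \<in> KK" and h: "h \<in> KK" and base: "k \<alpha> = h \<alpha>"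
    and st: "\<And>u v. u \<in> V \<Longrightarrow> v \<in> nb u \<Longrightarrow> straight k u v \<longleftrightarrow> straight h u v"
  shows "k = h"
proof -
  have step: "k v = h v" if uv: "u \<in> V" "v \<in> V" "E u v" and Pu: "k u = h u" for u v
  proof -
    have vnb: "v \<in> nb u" using uv by (simp add: nb_mem)
    obtain n where n: "n \<in> N" "k u = n u" using KN[OF k uv(1)] by blast
    have hn: "h u = n u" using n Pu by simp
    have sk: "straight k u v \<longleftrightarrow> k v = n v" using straight_iff[of n u v k, OF n(1) uv(1) uv(2) n(2)] .
    have sh: "straight h u v \<longleftrightarrow> h v = n v" using straight_iff[of n u v h, OF n(1) uv(1) uv(2) hn] .
    show ?thesis
    proof (cases "straight k u v")
      case True
      then show ?thesis using st[OF uv(1) vnb] sk sh by simp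
    next
      case False
      then have F: "\<not> straight h u v" using st[OF uv(1) vnb] by simp
      obtain w where w: "w \<in> nb u \<inter> orb v" "k v = n w" using K_nb[OF k uv(1) vnb n] by blast
      obtain w' where w': "w' \<in> nb u \<inter> orb v" "h v = n w'" using K_nb[OF h uv(1) vnb n(1) hn] by blast
      have wv: "w \<noteq> v" using False sk w(2) by auto
      have w'v: "w' \<noteq> v" using F sh w'(2) by auto
      have S: "finite (nb u \<inter> orb v)" "card (nb u \<inter> orb v) \<le> 2"
        using fin_nb cnt_le2[OF bB uv(1) orb_in[OF uv(2)]] by auto
      have vm: "v \<in> nb u \<inter> orb v" using vnb orb_self[OF uv(2)] by blast
      have "w' = w" using le2_elem[OF S w(1) vm w'(1)] wv w'v by auto
      then show ?thesis using w(2) w'(2) by simp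
    qed
  qed
  have "k v = h v" if "v \<in> V" for v
    using propag[where P = "\<lambda>u. k u = h u", OF base step that] .
  then show ?thesis using ext_eq[OF KG[OF k] KG[OF h]] by blast
qed

lemma G_in_K: "g \<in> G \<Longrightarrow> g \<alpha> = \<alpha> \<Longrightarrow> g \<in> KK"
proof -
  assume g: "g \<in> G" "g \<alpha> = \<alpha>"
  have step: "g ` orb v = orb v" if uv: "u \<in> V" "v \<in> V" "E u v" and Pu: "g ` orb u = orb u" for u v
  proof -
    have vnb: "v \<in> nb u" using uv by (simp add: nb_mem)
    have gu: "g u \<in> orb u" using Pu orb_self[OF uv(1)] by blast
    have guV: "g u \<in> V" "g v \<in> V" using gV[OF g(1)] uv by auto
    have ogu: "orb (g u) = orb u" using orb_eq[OF uv(1) gu] .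
    have gvnb: "g v \<in> nb (g u)" using nbG[OF g(1) uv(1)] vnb by blast
    have q1: "orb (g v) \<in> Qn (orb u)" using nb_Q[OF bB guV(1) gvnb] ogu by simp
    have q2: "orb v \<in> Qn (orb u)" using nb_Q[OF bB uv(1) vnb] .
    have "cntn u (orb (g v)) = cntn (g u) (orb (g v))"
      using cnt_orb[OF bB uv(1) guV(1) ogu[symmetric] orb_in[OF guV(2)]] .
    also have "\<dots> = cntn (g u) (g ` orb v)" using orbG[OF g(1) uv(2)] by simp
    also have "\<dots> = cntn u (orb v)" using cntG[OF g(1) uv(1) orb_in[OF uv(2)]] .
    finally have "orb (g v) = orb v" using cnt_inj[OF bB uv(1) q1 q2] by blast
    then show ?thesis using orbG[OF g(1) uv(2)] by simp
  qed
  have b0: "g ` orb \<alpha> = orb \<alpha>" using orbG[OF g(1) aV] g(2) by simp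
  have all: "g ` orb v = orb v" if "v \<in> V" for v
    using propag[where P = "\<lambda>u. g ` orb u = orb u", OF b0 step that] .
  have "\<forall>B\<in>Orbs. g ` B = B"
  proof
    fix B assume "B \<in> Orbs"
    then obtain b where "b \<in> V" "B = orb b" unfolding OO_mem by blast
    then show "g ` B = B" using all by simp
  qed
  then show ?thesis unfolding orbit_kernel_def using g(1) by simp
qed

end
end



lemma invol_half:
  assumes "finite A" "\<forall>x\<in>A. D x \<in> A \<and> D x \<noteq> x \<and> D (D x) = x"
  shows "\<exists>T\<subseteq>A. card A = 2 * card T \<and> (\<forall>x\<in>A. x \<in> T \<longleftrightarrow> D x \<notin> T)"
  using assms
proof (induction A rule: finite_psubset_induct)
  case (psubset A)
  show ?case
  proof (cases "A = {}")
    case True then show ?thesis by auto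
  next
    case False
    then obtain x where x: "x \<in> A" by blast
    have Dx: "D x \<in> A" "D x \<noteq> x" "D (D x) = x" using psubset.prems x by auto
    let ?A' = "A - {x, D x}"
    have sub: "?A' \<subset> A" using x by blast
    have cl: "\<forall>y\<in>?A'. D y \<in> ?A' \<and> D y \<noteq> y \<and> D (D y) = y"
    proof
      fix y assume y: "y \<in> ?A'"
      have "D y \<in> A" "D y \<noteq> y" "D (D y) = y" using psubset.prems y by auto
      moreover have "D y \<noteq> x" using y Dx(3) \<open>D (D y) = y\<close> by auto
      moreover have "D y \<noteq> D x"
      proof
        assume "D y = D x"
        then have "D (D y) = D (D x)" by simp
        then have "y = x" using \<open>D (D y) = y\<close> Dx(3) by simp
        then show False using y by blast
      qed
      ultimately show "D y \<in> ?A' \<and> D y \<noteq> y \<and> D (D y) = y" by blast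
    qed
    obtain T' where T': "T' \<subseteq> ?A'" "card ?A' = 2 * card T'" "\<forall>y\<in>?A'. y \<in> T' \<longleftrightarrow> D y \<notin> T'"
      using psubset.IH[OF sub cl] by blast
    let ?T = "insert x T'"
    have fA: "finite A" using psubset.hyps .
    have xT': "x \<notin> T'" using T'(1) by blast
    have cT: "card ?T = card T' + 1" using xT' finite_subset[OF T'(1)] fA by simp
    have cA: "card A = card ?A' + 2"
    proof -
      have "{x, D x} \<subseteq> A" using x Dx by blast
      moreover have "card {x, D x} = 2" using Dx(2) by simp
      ultimately show ?thesis using card_Diff_subset[of "{x, D x}" A] fA card_mono[OF fA, of "{x, D x}"] by simp
    qed
    have Tprop: "\<forall>y\<in>A. y \<in> ?T \<longleftrightarrow> D y \<notin> ?T"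
    proof
      fix y assume y: "y \<in> A"
      show "y \<in> ?T \<longleftrightarrow> D y \<notin> ?T"
      proof (cases "y = x")
        case True
        have "D x \<notin> T'" using T'(1) by blast
        then show ?thesis using True Dx(2) by simp
      next
        case False
        show ?thesis
        proof (cases "y = D x")
          case True
          then show ?thesis using Dx T'(1) by auto
        next
          case False2: False
          then have yA': "y \<in> ?A'" using y \<open>y \<noteq> x\<close> by blast
          have "D y \<noteq> x" using cl yA' by blast
          then show ?thesis using T'(3) yA' \<open>y \<noteq> x\<close> by simp
        qed
      qed
    qed
    have "?T \<subseteq> A" using T'(1) x by blast
    moreover have "card A = 2 * card ?T" using cA cT T'(2) by simp
    ultimately show ?thesis using Tprop by blast
  qed
qed

lemma sq_comm:
  fixes H (structure)
  assumes grp: "group H" and sq: "\<forall>x\<in>carrier H. x \<otimes> x = \<one>"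
    and x: "x \<in> carrier H" and y: "y \<in> carrier H"
  shows "x \<otimes> y = y \<otimes> x"
proof -
  interpret group H by (rule grp)
  have ix: "inv x = x" using inv_equality[OF _ x x] sq x by simp
  have iy: "inv y = y" using inv_equality[OF _ y y] sq y by simp
  have xy: "x \<otimes> y \<in> carrier H" using x y by simp
  have "inv (x \<otimes> y) = x \<otimes> y" using inv_equality[OF _ xy xy] sq xy by simp
  moreover have "inv (x \<otimes> y) = y \<otimes> x" using inv_mult_group[OF x y] ix iy by simp
  ultimately show ?thesis by simp
qed

context L begin
context
  assumes bB: "cntn \<alpha> (orb \<alpha>) = 0"
begin

definition DO :: "'a set \<Rightarrow> 'a set" where
  "DO XX = (THE Y. Y \<in> Qn XX \<and> (\<forall>u\<in>XX. cntn u Y = 2))"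

lemma DO_prop: "XX \<in> Orbs \<Longrightarrow> DO XX \<in> Qn XX \<and> (\<forall>u\<in>XX. cntn u (DO XX) = 2)"
proof -
  assume X: "XX \<in> Orbs"
  obtain x0 where x0: "x0 \<in> V" "XX = orb x0" using X unfolding OO_mem by blast
  obtain D S where s: "Qn (orb x0) = {D, S}" "D \<noteq> S" "cntn x0 D = 2" "cntn x0 S = 1" using profB[OF bB x0(1)] by blast
  have DQ: "D \<in> Qn XX" using s x0 by simp
  have DO': "D \<in> Orbs" using DQ unfolding Q_mem by blast
  have P: "D \<in> Qn XX \<and> (\<forall>u\<in>XX. cntn u D = 2)"
  proof -
    have "cntn u D = 2" if u: "u \<in> XX" for u
    proof -
      have uV: "u \<in> V" using OO_eq[OF X u] by simp
      have "orb u = orb x0" using orb_eq[OF x0(1)] u x0(2) by simp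
      then show ?thesis using cnt_orb[OF bB uV x0(1) _ DO'] s(3) by simp
    qed
    then show ?thesis using DQ by blast
  qed
  have U: "Y = D" if "Y \<in> Qn XX \<and> (\<forall>u\<in>XX. cntn u Y = 2)" for Y
  proof -
    have "cntn x0 Y = 2" using that orb_self[OF x0(1)] x0(2) by simp
    then show ?thesis using cnt_inj[OF bB x0(1)] that DQ x0(2) s(3) by simp
  qed
  have "DO XX = D" unfolding DO_def
    using the_equality[where P = "\<lambda>Y. Y \<in> Qn XX \<and> (\<forall>u\<in>XX. cntn u Y = 2)", OF P U] .
  then show ?thesis using P by simp
qed

lemma DO_char: "XX \<in> Orbs \<Longrightarrow> u \<in> XX \<Longrightarrow> Y \<in> Qn XX \<Longrightarrow> cntn u Y = 2 \<Longrightarrow> DO XX = Y"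
proof -
  assume a: "XX \<in> Orbs" "u \<in> XX" "Y \<in> Qn XX" "cntn u Y = 2"
  have uV: "u \<in> V" and X: "XX = orb u" using OO_eq[OF a(1) a(2)] by auto
  have "DO XX \<in> Qn XX" "cntn u (DO XX) = 2" using DO_prop[OF a(1)] a(2) by auto
  then show ?thesis using cnt_inj[OF bB uV, of "DO XX" Y] a(3,4) X by simp
qed

lemma Q_symm: "XX \<in> Orbs \<Longrightarrow> Y \<in> Qn XX \<Longrightarrow> XX \<in> Qn Y"
proof -
  assume a: "XX \<in> Orbs" "Y \<in> Qn XX"
  then have "Y \<in> Orbs" "XX \<noteq> Y" "\<exists>u\<in>XX. \<exists>v\<in>Y. E u v" unfolding Q_mem by auto
  then have "Y \<noteq> XX" "\<exists>v\<in>Y. \<exists>u\<in>XX. E v u" using Esym by auto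
  then show ?thesis unfolding Q_mem using a(1) by blast
qed

end
end


context L begin

lemma stab_subgroup: "subgroup (stab G \<alpha>) (BijGroup V)"
proof -
  interpret B: group "BijGroup V" by (rule group_BijGroup)
  show ?thesis
  proof (rule B.subgroupI)
    show "stab G \<alpha> \<subseteq> carrier (BijGroup V)" using GBij by (auto simp: stab_def BijGroup_def)
    show "stab G \<alpha> \<noteq> {}" using one_G aV by (auto simp: stab_def)
  next
    fix a assume a: "a \<in> stab G \<alpha>"
    then have aG: "a \<in> G" "a \<alpha> = \<alpha>" by (auto simp: stab_def)
    have "inv\<^bsub>BijGroup V\<^esub> a \<in> G" using subgroup.m_inv_closed[OF subG aG(1)] .
    moreover have "inv\<^bsub>BijGroup V\<^esub> a = (\<lambda>x\<in>V. inv_into V a x)" using inv_BijGroup[OF GBij[OF aG(1)]] .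
    moreover have "inv_into V a \<alpha> = \<alpha>" using inv_into_f_f[OF ginj[OF aG(1)] aV] aG(2) by simp
    ultimately show "inv\<^bsub>BijGroup V\<^esub> a \<in> stab G \<alpha>" using aV by (simp add: stab_def)
  next
    fix a b assume ab: "a \<in> stab G \<alpha>" "b \<in> stab G \<alpha>"
    then have aG: "a \<in> G" "a \<alpha> = \<alpha>" "b \<in> G" "b \<alpha> = \<alpha>" by (auto simp: stab_def)
    have "a \<otimes>\<^bsub>BijGroup V\<^esub> b \<in> G" using subgroup.m_closed[OF subG aG(1) aG(3)] .
    moreover have "(a \<otimes>\<^bsub>BijGroup V\<^esub> b) \<alpha> = \<alpha>"
      using GBij[OF aG(1)] GBij[OF aG(3)] aV aG by (simp add: BijGroup_def compose_def)
    ultimately show "a \<otimes>\<^bsub>BijGroup V\<^esub> b \<in> stab G \<alpha>" by (simp add: stab_def)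
  qed
qed

context
  assumes bB: "cntn \<alpha> (orb \<alpha>) = 0"
begin

lemma DO_invol: "XX \<in> Orbs \<Longrightarrow> DO XX \<in> Orbs \<and> DO XX \<noteq> XX \<and> DO (DO XX) = XX"
proof -
  assume X: "XX \<in> Orbs"
  let ?Y = "DO XX"
  have YQ: "?Y \<in> Qn XX" and c2: "\<forall>u\<in>XX. cntn u ?Y = 2" using DO_prop[OF bB X] by auto
  have YO: "?Y \<in> Orbs" "XX \<noteq> ?Y" using YQ unfolding Q_mem by auto
  have XQ: "XX \<in> Qn ?Y" using Q_symm[OF bB X YQ] .
  obtain y0 where y0: "y0 \<in> V" "?Y = orb y0" using YO(1) unfolding OO_mem by blast
  have y0Y: "y0 \<in> ?Y" using y0 orb_self by simp
  obtain x0 where x0: "x0 \<in> V" "XX = orb x0" using X unfolding OO_mem by blast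
  have x0X: "x0 \<in> XX" using x0 orb_self by simp
  have "cntn y0 XX = 2"
  proof (rule ccontr)
    assume nc: "cntn y0 XX \<noteq> 2"
    have c1: "cntn y XX = 1" if y: "y \<in> ?Y" for y
    proof -
      have yV: "y \<in> V" "orb y = orb y0" using OO_eq[OF YO(1) y] y0(2) by auto
      have "cntn y0 XX = 1" using cnt12[OF bB y0(1)] XQ y0(2) nc by auto
      then show ?thesis using cnt_orb[OF bB yV(1) y0(1) yV(2) X] by simp
    qed
    define f where "f y = (THE x. x \<in> nb y \<inter> XX)" for y
    have fprop: "f y = x" if yx: "y \<in> ?Y" "x \<in> nb y \<inter> XX" for y x
    proof -
      have "cntn y XX = 1" using c1 yx(1) by blast
      then obtain z where z: "nb y \<inter> XX = {z}" by (rule card_1_singletonE)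
      then have "x = z" using that(2) by auto
      then show ?thesis unfolding f_def using z by simp
    qed
    have fin: "f y \<in> XX" if yy: "y \<in> ?Y" for y
    proof -
      have "cntn y XX = 1" using c1 yy by blast
      then obtain z where z: "nb y \<inter> XX = {z}" by (rule card_1_singletonE)
      then have "f y = z" using fprop[OF yy] by auto
      then show ?thesis using z by auto
    qed
    have img: "f ` ?Y = XX"
    proof
      show "f ` ?Y \<subseteq> XX" using fin by blast
      show "XX \<subseteq> f ` ?Y"
      proof
        fix x assume x: "x \<in> XX"
        have "cntn x ?Y = 2" using c2 x by blast
        then have "nb x \<inter> ?Y \<noteq> {}" by (metis card.empty zero_neq_numeral)
        then obtain y where y: "y \<in> nb x" "y \<in> ?Y" by blast
        have xV: "x \<in> V" using OO_eq[OF X x] by simp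
        have "x \<in> nb y" using y(1) xV Esym by (simp add: nb_mem)
        then have "f y = x" using fprop[OF y(2)] x by simp
        then show "x \<in> f ` ?Y" using y(2) by blast
      qed
    qed
    have cardeq: "card ?Y = card XX"
    proof -
      obtain g where g: "g \<in> G" "g x0 = y0" using vt x0(1) y0(1) unfolding vertex_transitive_def by blast
      have "g ` XX = ?Y" using orbG[OF g(1) x0(1)] g(2) x0(2) y0(2) by simp
      moreover have "inj_on g XX" using inj_on_subset[OF ginj[OF g(1)] orbits_sub[OF X]] .
      ultimately show ?thesis using card_image by metis
    qed
    have finY: "finite ?Y" using finite_subset[OF orbits_sub[OF YO(1)] finV] .
    have "card (f ` ?Y) = card ?Y" using img cardeq by simp
    then have inj: "inj_on f ?Y" by (rule eq_card_imp_inj_on[OF finY])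
    have "cntn x0 ?Y = 2" using c2 x0X by blast
    then obtain y1 y2 where yy: "nb x0 \<inter> ?Y = {y1, y2}" "y1 \<noteq> y2" unfolding card_2_iff by blast
    have y12: "y1 \<in> ?Y" "y2 \<in> ?Y" "y1 \<in> nb x0" "y2 \<in> nb x0" using yy(1) by auto
    have "x0 \<in> nb y1" "x0 \<in> nb y2" using y12 x0(1) Esym by (auto simp: nb_mem)
    then have "f y1 = x0" "f y2 = x0" using fprop y12 x0X by auto
    then have "y1 = y2" using inj_onD[OF inj] y12 by metis
    then show False using yy(2) by simp
  qed
  then have "DO ?Y = XX" using DO_char[OF bB YO(1) y0Y XQ] by simp
  then show ?thesis using YO by simp
qed

lemma T_ex: "\<exists>T\<subseteq>Orbs. card Orbs = 2 * card T \<and> (\<forall>XX\<in>Orbs. XX \<in> T \<longleftrightarrow> DO XX \<notin> T)"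
  using invol_half[OF finOO, of "DO"] DO_invol by blast

definition PhiT :: "'a set set \<Rightarrow> ('a \<Rightarrow> 'a) \<Rightarrow> 'a set set" where
  "PhiT T k = {XX \<in> T. \<exists>u\<in>XX. \<exists>v\<in>nb u. v \<in> DO XX \<and> \<not> straight k u v}"

lemma Phi_char:
  assumes k: "k \<in> KK" and X: "XX \<in> Orbs" and a: "a \<in> XX" and b: "b \<in> nb a" "b \<in> DO XX"
  shows "(\<exists>u\<in>XX. \<exists>v\<in>nb u. v \<in> DO XX \<and> \<not> straight k u v) \<longleftrightarrow> \<not> straight k a b"
proof
  assume "\<exists>u\<in>XX. \<exists>v\<in>nb u. v \<in> DO XX \<and> \<not> straight k u v"
  then obtain u v where uv: "u \<in> XX" "v \<in> nb u" "v \<in> DO XX" "\<not> straight k u v" by blast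
  have aV: "a \<in> V" and Xa: "XX = orb a" using OO_eq[OF X a] by auto
  have DOO: "DO XX \<in> Orbs" using DO_invol[OF X] by simp
  have "orb v = orb b" using OO_eq[OF DOO uv(3)] OO_eq[OF DOO b(2)] by simp
  then show "\<not> straight k a b" using SI3[OF bB k aV b(1) _ uv(2)] uv(1,4) Xa by auto
next
  assume "\<not> straight k a b"
  then show "\<exists>u\<in>XX. \<exists>v\<in>nb u. v \<in> DO XX \<and> \<not> straight k u v" using a b by blast
qed

lemma st_agree:
  assumes T: "T \<subseteq> Orbs" "\<forall>XX\<in>Orbs. XX \<in> T \<longleftrightarrow> DO XX \<notin> T"
    and k: "k \<in> KK" and h: "h \<in> KK" and eq: "PhiT T k = PhiT T h"
    and u: "u \<in> V" and v: "v \<in> nb u"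
  shows "straight k u v \<longleftrightarrow> straight h u v"
proof -
  have vV: "v \<in> V" using v by (simp add: nb_mem)
  have X: "orb u \<in> Orbs" using orb_in[OF u] .
  have YQ: "orb v \<in> Qn (orb u)" using nb_Q[OF bB u v] .
  show ?thesis
  proof (cases "cntn u (orb v) = 1")
    case True
    then show ?thesis using S_straight[OF bB k u v] S_straight[OF bB h u v] by simp
  next
    case False
    then have "cntn u (orb v) = 2" using cnt12[OF bB u YQ] by simp
    then have D: "DO (orb u) = orb v" using DO_char[OF bB X orb_self[OF u] YQ] by simp
    have memk: "orb u \<in> PhiT T k \<longleftrightarrow> orb u \<in> T \<and> \<not> straight k u v"
      using Phi_char[OF k X orb_self[OF u] v] D orb_self[OF vV] unfolding PhiT_def by auto
    have memh: "orb u \<in> PhiT T h \<longleftrightarrow> orb u \<in> T \<and> \<not> straight h u v"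
      using Phi_char[OF h X orb_self[OF u] v] D orb_self[OF vV] unfolding PhiT_def by auto
    show ?thesis
    proof (cases "orb u \<in> T")
      case True
      then show ?thesis using memk memh eq by simp
    next
      case False
      have Y: "orb v \<in> Orbs" using orb_in[OF vV] .
      have vT: "orb v \<in> T" using T(2) X False D by simp
      have D2: "DO (orb v) = orb u" using DO_invol[OF X] D by simp
      have unb: "u \<in> nb v" using v u Esym by (simp add: nb_mem)
      have memk2: "orb v \<in> PhiT T k \<longleftrightarrow> \<not> straight k v u"
        using Phi_char[OF k Y orb_self[OF vV] unb] D2 orb_self[OF u] vT unfolding PhiT_def by auto
      have memh2: "orb v \<in> PhiT T h \<longleftrightarrow> \<not> straight h v u"
        using Phi_char[OF h Y orb_self[OF vV] unb] D2 orb_self[OF u] vT unfolding PhiT_def by auto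
      show ?thesis using memk2 memh2 eq straight_sym by metis
    qed
  qed
qed

lemma caseB_main:
  "even (card Orbs) \<and> stab G \<alpha> = stab KK \<alpha>
   \<and> elementary_abelian_2group (BijGroup V \<lparr>carrier := stab G \<alpha>\<rparr>)
   \<and> card (stab G \<alpha>) \<le> 2 ^ (card Orbs div 2)"
proof -
  obtain T where T: "T \<subseteq> Orbs" "card Orbs = 2 * card T" "\<forall>XX\<in>Orbs. XX \<in> T \<longleftrightarrow> DO XX \<notin> T"
    using T_ex by blast
  have SK: "stab G \<alpha> = stab KK \<alpha>"
    using G_in_K[OF bB] KG unfolding stab_def by blast
  have inj: "inj_on (PhiT T) (stab KK \<alpha>)"
  proof (rule inj_onI)
    fix k h assume kh: "k \<in> stab KK \<alpha>" "h \<in> stab KK \<alpha>" "PhiT T k = PhiT T h"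
    have kk: "k \<in> KK" "k \<alpha> = \<alpha>" "h \<in> KK" "h \<alpha> = \<alpha>" using kh by (auto simp: stab_def)
    show "k = h"
      using K_eq[OF bB kk(1) kk(3)] kk st_agree[OF T(1) T(3) kk(1) kk(3) kh(3)] by simp
  qed
  have "PhiT T ` stab KK \<alpha> \<subseteq> Pow T" unfolding PhiT_def by blast
  moreover have finT: "finite T" using finite_subset[OF T(1) finOO] .
  ultimately have "card (stab KK \<alpha>) \<le> card (Pow T)"
    using card_inj_on_le[OF inj] finite_Pow_iff by blast
  then have cb: "card (stab G \<alpha>) \<le> 2 ^ (card Orbs div 2)" using card_Pow[of T] finT T(2) SK by simp
  let ?H = "BijGroup V \<lparr>carrier := stab G \<alpha>\<rparr>"
  have grpH: "group ?H" using subgroup.subgroup_is_group[OF stab_subgroup group_BijGroup] .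
  have sq: "\<forall>x\<in>carrier ?H. x \<otimes>\<^bsub>?H\<^esub> x = \<one>\<^bsub>?H\<^esub>"
  proof
    fix x assume "x \<in> carrier ?H"
    then have x: "x \<in> G" "x \<alpha> = \<alpha>" by (auto simp: stab_def)
    have xK: "x \<in> KK" using G_in_K[OF bB x] .
    have "compose V x x = idV"
    proof
      fix y
      show "compose V x x y = idV y"
        using K_invol[OF bB xK x(2)] by (cases "y \<in> V") (auto simp: compose_def)
    qed
    then show "x \<otimes>\<^bsub>?H\<^esub> x = \<one>\<^bsub>?H\<^esub>" using GBij[OF x(1)] by (simp add: BijGroup_def)
  qed
  have "comm_group ?H"
  proof (rule group.group_comm_groupI[OF grpH])
    fix x y assume "x \<in> carrier ?H" "y \<in> carrier ?H"
    then show "x \<otimes>\<^bsub>?H\<^esub> y = y \<otimes>\<^bsub>?H\<^esub> x" using sq_comm[OF grpH sq] by blast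
  qed
  then have "elementary_abelian_2group ?H" using sq unfolding elementary_abelian_2group_def by blast
  then show ?thesis using cb SK T(2) by simp
qed

end
end



theorem lemma2p3:
  fixes V :: "'a set" and E :: "'a \<Rightarrow> 'a \<Rightarrow> bool"
    and G N :: "('a \<Rightarrow> 'a) set" and \<alpha> :: 'a and r :: nat
  assumes "simple_graph V E" and "graph_connected V E" and "cubic V E"
    and "\<alpha> \<in> V"
    and "subgroup G (BijGroup V)" and "G \<subseteq> Aut V E" and "vertex_transitive V G"
    and "normal N (BijGroup V \<lparr>carrier := G\<rparr>)" and "semiregular V N"
    and "\<exists>k. card (stab G \<alpha>) = 2 ^ k" and "card (stab G \<alpha>) \<noteq> 1"
    and "is_cycle (orbits V N) (quot_adj E)" and "card (orbits V N) = r" and "r \<ge> 3"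
  shows "(card (stab G \<alpha>) = 2 \<and> stab (orbit_kernel V G N) \<alpha> = {\<one>\<^bsub>BijGroup V\<^esub>})
      \<or> (even r \<and> stab G \<alpha> = stab (orbit_kernel V G N) \<alpha>
         \<and> elementary_abelian_2group (BijGroup V \<lparr>carrier := stab G \<alpha>\<rparr>)
         \<and> card (stab G \<alpha>) \<le> 2 ^ (r div 2))"
proof -
  interpret L V E G N \<alpha>
    by (rule L.intro[OF assms(1-9) assms(12)])
  obtain Y1 Y2 where s: "cntn \<alpha> Y1 \<ge> 1" "cntn \<alpha> Y2 \<ge> 1"
     "cntn \<alpha> (orb \<alpha>) + cntn \<alpha> Y1 + cntn \<alpha> Y2 = 3"
    using local_struct[OF aV] by blast
  have "cntn \<alpha> (orb \<alpha>) = 0 \<or> cntn \<alpha> (orb \<alpha>) = 1" using s by linarith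
  then show ?thesis
  proof
    assume b: "cntn \<alpha> (orb \<alpha>) = 1"
    have le: "card (stab G \<alpha>) \<le> 2" using caseA_card[OF b] .
    obtain k where k: "card (stab G \<alpha>) = 2 ^ k" using assms(10) by blast
    have "k \<noteq> 0" using k assms(11) by auto
    moreover have "k \<le> 1"
    proof (rule ccontr)
      assume "\<not> k \<le> 1"
      then have "(2::nat) ^ 2 \<le> 2 ^ k" by (intro power_increasing) auto
      then show False using k le by simp
    qed
    ultimately have "k = 1" by simp
    then have "card (stab G \<alpha>) = 2" using k by simp
    then show ?thesis using caseA_K[OF b] by blast
  next
    assume b: "cntn \<alpha> (orb \<alpha>) = 0"
    then show ?thesis using caseB_main[OF b] assms(13) by blast
  qed
qed



end
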